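(* If the hazard function $\lambda(t)$ of the random lifetime $X$ is decreasing in $t\in\mathcal S$, then $$H^w(t)\ge -\delta(t)\log\lambda(t)\qquad\text{for all } t\in\mathcal S.$$
   Context: $X$ is an absolutely continuous non-negative random variable with density $f$, support $\mathcal S=(0,\nu)$, $\nu\le+\infty$, survival function $\overline F$, and hazard function $\lambda(t)=f(t)/\overline F(t)$; "decreasing" means non-increasing; $\log$ is the natural logarithm. Weighted residual entropy: $H^w(t)=-\int_t^{\infty}x\,\frac{f(x)}{\overline F(t)}\log\frac{f(x)}{\overline F(t)}\,dx$. Conditional mean: $\delta(t)=\mathrm{E}(X\mid X>t)=\frac{1}{\overline F(t)}\int_t^\infty x f(x)\,dx$. *)

theory Defs
  imports "HOL-Probability.Probability"
begin

definition surv :: "(real \<Rightarrow> real) \<Rightarrow> real \<Rightarrow> real" where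
  "surv f t = (LINT x:{t<..}|lborel. f x)"

definition hazard :: "(real \<Rightarrow> real) \<Rightarrow> real \<Rightarrow> real" where
  "hazard f t = f t / surv f t"

definition cond_mean :: "(real \<Rightarrow> real) \<Rightarrow> real \<Rightarrow> real" where
  "cond_mean f t = (LINT x:{t<..}|lborel. x * f x) / surv f t"

definition wres_entropy :: "(real \<Rightarrow> real) \<Rightarrow> real \<Rightarrow> real" where
  "wres_entropy f t =
     - (LINT x:{t<..}|lborel. x * (f x / surv f t) * ln (f x / surv f t))"

end

theory Submission
  imports Defs
begin

theorem theorem3p3:
  fixes M :: "'a measure" and X :: "'a \<Rightarrow> real"
    and f :: "real \<Rightarrow> real" and \<nu> :: ereal
  assumes "prob_space M"
    and "distributed M lborel X (\<lambda>x. ennreal (f x))"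
    and "\<And>x. f x \<ge> 0"
    and "\<nu> > 0"
    and "\<And>x. f x > 0 \<longleftrightarrow> (0 < x \<and> ereal x < \<nu>)"
    and "\<And>s t. 0 < s \<Longrightarrow> s \<le> t \<Longrightarrow> ereal t < \<nu> \<Longrightarrow> hazard f t \<le> hazard f s"
    and "set_integrable lborel {0<..} (\<lambda>x. x * f x)"
    and "\<And>t. 0 < t \<Longrightarrow> ereal t < \<nu> \<Longrightarrow>
           set_integrable lborel {t<..} (\<lambda>x. x * f x * ln (f x))"
  shows "\<forall>t. 0 < t \<and> ereal t < \<nu> \<longrightarrow>
           wres_entropy f t \<ge> - cond_mean f t * ln (hazard f t)"
proof -
  note f0 = assms(3) and fpos = assms(5) and haz = assms(6)
  have fmeas[measurable]: "f \<in> borel_measurable lborel"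
    using distributed_real_measurable[OF _ assms(2)] assms(3) by blast
  have fint: "integrable lborel f"
  proof -
    have "integrable lborel (\<lambda>x. f x * 1) \<longleftrightarrow> integrable M (\<lambda>x. 1::real)"
      by (rule distributed_integrable[OF assms(2)]) (auto simp: f0)
    moreover have "integrable M (\<lambda>x. 1::real)"
    proof -
      interpret prob_space M by (rule assms(1))
      show ?thesis by simp
    qed
    ultimately show ?thesis by simp
  qed
  have fset: "set_integrable lborel {a<..} f" for a
    unfolding set_integrable_def by (rule integrable_mult_indicator) (auto simp: fint)
  have surv_nn: "surv f a \<ge> 0" for a
    unfolding surv_def set_lebesgue_integral_def by (rule Bochner_Integration.integral_nonneg) (auto simp: f0 indicator_def)
  have surv_mono: "surv f b \<le> surv f a" if "a \<le> b" for a b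
    unfolding surv_def set_lebesgue_integral_def
    apply (rule integral_mono)
    using fset[of b] fset[of a] that f0
    by (auto simp: set_integrable_def split: split_indicator)
  have surv_pos: "surv f a > 0" if a0: "0 < a" and a1: "ereal a < \<nu>" for a
  proof (rule ccontr)
    assume "\<not> surv f a > 0"
    then have "surv f a = 0" using surv_nn[of a] by simp
    then have "integral\<^sup>L lborel (\<lambda>x. indicator {a<..} x *\<^sub>R f x) = 0"
      by (simp add: surv_def set_lebesgue_integral_def)
    then have AE0: "AE x in lborel. indicator {a<..} x *\<^sub>R f x = 0"
      using integral_nonneg_eq_0_iff_AE[of lborel "\<lambda>x. indicator {a<..} x *\<^sub>R f x"]
        fset[of a] f0 by (auto simp: set_integrable_def split: split_indicator)
    obtain b where b: "ereal a < ereal b" "ereal b < \<nu>" using ereal_dense2[OF a1] by blast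
    have "AE x in lborel. x \<notin> {a<..<b}"
      using AE0
    proof (rule AE_mp)
      show "AE x in lborel. indicator {a<..} x *\<^sub>R f x = 0 \<longrightarrow> x \<notin> {a<..<b}"
      proof (rule AE_I2, intro impI notI)
        fix x assume h: "indicator {a<..} x *\<^sub>R f x = 0" "x \<in> {a<..<b}"
        then have "ereal x < \<nu>" using b(2) by (meson ereal_less_eq(3) greaterThanLessThan_iff less_imp_le order_le_less_trans)
        then have "f x > 0" using fpos[of x] h(2) a0 by auto
        then show False using h by (auto simp: indicator_def)
      qed
    qed
    then have "emeasure lborel {a<..<b} = 0"
      by (subst (asm) AE_iff_measurable[of "{a<..<b}"]) auto
    then show False using b(1) by simp
  qed
  have f_le: "f x \<le> f t" if "0 < t" "ereal t < \<nu>" "t < x" for t x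
  proof (cases "ereal x < \<nu>")
    case False
    then have "f x = 0" using fpos[of x] f0[of x] by auto
    then show ?thesis using f0[of t] by simp
  next
    case True
    have sx: "surv f x > 0" using surv_pos[of x] True that by simp
    have st: "surv f t > 0" using surv_pos[of t] that by simp
    have "f x = hazard f x * surv f x" using sx by (simp add: hazard_def)
    also have "\<dots> \<le> hazard f t * surv f x"
      using haz[of t x] that True sx by (intro mult_right_mono) auto
    also have "\<dots> \<le> hazard f t * surv f t"
      using surv_mono[of t x] that f0[of t] st by (intro mult_left_mono) (auto simp: hazard_def)
    also have "\<dots> = f t" using st by (simp add: hazard_def)
    finally show ?thesis .
  qed
  show ?thesis
  proof (intro allI impI, elim conjE)
    fix t assume t: "0 < t" "ereal t < \<nu>"
    define S where "S = surv f t"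
    have S: "S > 0" using surv_pos[OF t] by (simp add: S_def)
    define L where "L = hazard f t"
    have L: "L = f t / S" by (simp add: L_def S_def hazard_def)
    have ftpos: "f t > 0" using fpos[of t] t by simp
    have xf: "set_integrable lborel {t<..} (\<lambda>x. x * f x)"
      by (rule set_integrable_subset[OF assms(7)]) (use t in auto)
    have xfl: "set_integrable lborel {t<..} (\<lambda>x. x * f x * ln (f x))"
      using assms(8)[OF t] .
    have eq: "(\<lambda>x. x * (f x / S) * ln (f x / S)) =
        (\<lambda>x. (1/S) * (x * f x * ln (f x)) - (ln S / S) * (x * f x))"
    proof
      fix x show "x * (f x / S) * ln (f x / S) = (1/S) * (x * f x * ln (f x)) - (ln S / S) * (x * f x)"
      proof (cases "f x = 0")
        case True then show ?thesis by simp
      next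
        case False
        then have "f x > 0" using f0[of x] by simp
        then show ?thesis using S by (simp add: ln_div field_simps)
      qed
    qed
    have int1: "set_integrable lborel {t<..} (\<lambda>x. x * (f x / S) * ln (f x / S))"
      unfolding eq using xf xfl by (intro set_integral_diff(1) set_integrable_mult_right) auto
    have eq2: "(\<lambda>x. x * (f x / S) * ln L) = (\<lambda>x. (ln L / S) * (x * f x))"
      by (auto simp: field_simps)
    have int2: "set_integrable lborel {t<..} (\<lambda>x. x * (f x / S) * ln L)"
      unfolding eq2 using xf by (intro set_integrable_mult_right) auto
    have pw: "x * (f x / S) * ln (f x / S) \<le> x * (f x / S) * ln L" if "x \<in> {t<..}" for x
    proof (cases "f x = 0")
      case True then show ?thesis by simp
    next
      case False
      then have fx: "f x > 0" using f0[of x] by simp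
      have "f x \<le> f t" using f_le[of t x] t that by simp
      then have "ln (f x / S) \<le> ln L" unfolding L using fx S
        by (subst ln_le_cancel_iff) (auto simp: divide_right_mono)
      moreover have "x * (f x / S) \<ge> 0" using that t fx S by simp
      ultimately show ?thesis by (metis mult_left_mono)
    qed
    have "(LINT x:{t<..}|lborel. x * (f x / S) * ln (f x / S)) \<le> (LINT x:{t<..}|lborel. x * (f x / S) * ln L)"
      by (rule set_integral_mono[OF int1 int2 pw])
    also have "\<dots> = (ln L / S) * (LINT x:{t<..}|lborel. x * f x)"
      unfolding eq2 by simp
    also have "\<dots> = cond_mean f t * ln L"
      by (simp add: cond_mean_def S_def)
    finally show "wres_entropy f t \<ge> - cond_mean f t * ln (hazard f t)"
      unfolding wres_entropy_def S_def L_def by (simp add: S_def)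
  qed
qed

end
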